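(* Let $f(y\mid\vec x)$ be a conditional density of $Y\in\mathbb R$ given $\vec X=\vec x\in\mathcal X$ that is continuous in $y$ for every $\vec x$, and suppose the estimate used satisfies $\widehat f=f$. For $\vec x\in\mathcal X$ and $t\ge0$ define the profile $g_{\vec x}(t)=\int_{\{y: f(y\mid\vec x)\ge t\}} f(y\mid\vec x)\,dy$. Let $\vec x_{n+1}\in\mathcal X$ and let $(\vec X_1,Y_1),\ldots,(\vec X_m,Y_m)$ be the samples falling in the same partition element as $\vec x_{n+1}$, where, conditionally on the features $\vec x_1,\ldots,\vec x_m$, the responses $Y_i$ are independent with densities $f(\cdot\mid\vec x_i)$, and assume $g_{\vec x_i}=g_{\vec x_{n+1}}$ for all $i=1,\ldots,m$. Let $T_m=q\big(\alpha;\{f(Y_i\mid\vec x_i):i=1,\ldots,m\}\big)$. Then for every fixed $\alpha\in(0,1)$, $$T_m\xrightarrow[m\to\infty]{\text{a.s.}} t^*,$$ where $t^*=t^*(\vec x_{n+1},\alpha)$ is the cutoff of the oracle band for $f(\cdot\mid\vec x_{n+1})$, i.e. the value such that $\{y: f(y\mid\vec x_{n+1})\ge t^*\}$ is the smallest predictive region with coverage $1-\alpha$ (equivalently $g_{\vec x_{n+1}}(t^* )=1-\alpha$).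
   Context: For a finite set of reals $\{t_1,\ldots,t_m\}$, $q(\beta;\{t_1,\ldots,t_m\})$ denotes its empirical $\beta$ quantile. *)

theory Defs
  imports "HOL-Probability.Probability"
begin

text \<open>Empirical beta-quantile of a finite (multi)set of reals, given as a list:
  the ceiling(beta m)-th smallest value (lower empirical quantile,
  inf of t with empirical CDF at t at least beta).\<close>
definition emp_quantile :: "real \<Rightarrow> real list \<Rightarrow> real" where
  "emp_quantile \<beta> ts = sort ts ! (nat \<lceil>\<beta> * real (length ts)\<rceil> - 1)"

definition profile :: "('x \<Rightarrow> real \<Rightarrow> real) \<Rightarrow> 'x \<Rightarrow> real \<Rightarrow> real" where
  "profile f x t = (LINT y:{y. t \<le> f x y}|lborel. f x y)"

end

theory Submission
  imports Defs
begin

lemma hoeff_AE: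
  fixes Z :: "nat \<Rightarrow> 'a \<Rightarrow> real" and p \<epsilon> :: real
  assumes P: "prob_space M"
    and indep: "prob_space.indep_vars M (\<lambda>_. borel) Z {1..}"
    and bnd: "\<And>i \<omega>. i \<ge> 1 \<Longrightarrow> \<omega> \<in> space M \<Longrightarrow> Z i \<omega> \<in> {0..1}"
    and ex: "\<And>i. i \<ge> 1 \<Longrightarrow> prob_space.expectation M (Z i) = p"
    and eps: "\<epsilon> > 0"
  shows "AE \<omega> in M. eventually (\<lambda>m. \<bar>(\<Sum>i=1..m. Z i \<omega>) - m * p\<bar> < m * \<epsilon>) sequentially"
proof -
  interpret prob_space M by fact
  define A where "A m = {\<omega>\<in>space M. real m * \<epsilon> \<le> \<bar>(\<Sum>i=1..m. Z i \<omega>) - m * p\<bar>}" for m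
  have rv: "\<And>i. i \<ge> 1 \<Longrightarrow> random_variable borel (Z i)"
    using indep unfolding indep_vars_def by auto
  have Am[measurable]: "A m \<in> sets M" for m
    unfolding A_def using rv by measurable
  have bound: "measure M (A m) \<le> 2 * exp (-2 * \<epsilon>\<^sup>2) ^ m" for m
  proof (cases "m = 0")
    case True then show ?thesis using prob_le_1[of "A 0"] by (simp del: prob_le_1)
  next
    case False
    interpret H: Hoeffding_ineq M "{1..m}" Z "\<lambda>_. 0" "\<lambda>_. 1" "\<Sum>i\<in>{1..m}. expectation (Z i)"
    proof unfold_locales
      show "indep_vars (\<lambda>_. borel) Z {1..m}"
        by (rule indep_vars_subset[OF indep]) auto
      fix i assume "i \<in> {1..m}"
      then show "AE x in M. Z i x \<in> {0..1}" using bnd by auto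
    qed auto
    have mu: "(\<Sum>i\<in>{1..m}. expectation (Z i)) = m * p" using ex by simp
    have pos: "(\<Sum>i\<in>{1..m}. (1 - 0::real)\<^sup>2) > 0" using False by simp
    have "measure M (A m) \<le> 2 * exp (-2 * (m*\<epsilon>)\<^sup>2 / (\<Sum>i\<in>{1..m}. (1 - 0::real)\<^sup>2))"
      using H.Hoeffding_ineq_abs_ge[OF _ pos, of "m*\<epsilon>"] eps unfolding A_def mu by simp
    also have "-2 * (m*\<epsilon>)\<^sup>2 / (\<Sum>i\<in>{1..m}. (1 - 0::real)\<^sup>2) = real m * (-2 * \<epsilon>\<^sup>2)"
      using False by (simp add: power2_eq_square field_simps)
    also have "exp (real m * (-2 * \<epsilon>\<^sup>2)) = exp (-2 * \<epsilon>\<^sup>2) ^ m"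
      by (rule exp_of_nat_mult)
    finally show ?thesis .
  qed
  have "summable (\<lambda>m. 2 * exp (-2 * \<epsilon>\<^sup>2) ^ m)"
    using eps by (intro summable_mult summable_geometric) auto
  then have "summable (\<lambda>m. measure M (A m))"
    by (rule summable_comparison_test'[where N=0]) (use bound in auto)
  then have "AE \<omega> in M. eventually (\<lambda>m. \<omega> \<in> space M - A m) sequentially"
    by (intro borel_cantelli_AE1) (auto simp: emeasure_eq_measure)
  then show ?thesis
    by (rule AE_mp) (auto intro!: AE_I2 elim!: eventually_mono simp: A_def)
qed



lemma quant_lower:
  fixes ts :: "real list"
  assumes "1 \<le> k" "k \<le> length ts" "length (filter (\<lambda>t. t < a) ts) < k"
  shows "a \<le> sort ts ! (k-1)"
proof (rule ccontr)
  define s where "s = sort ts"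
  assume "\<not> a \<le> sort ts ! (k-1)"
  then have lt: "s ! (k-1) < a" by (simp add: s_def)
  have srt: "sorted s" and len: "length s = length ts" by (simp_all add: s_def)
  have "\<forall>t\<in>set (take k s). t < a"
  proof
    fix t assume "t \<in> set (take k s)"
    then obtain j where j: "j < length (take k s)" "t = take k s ! j" by (metis in_set_conv_nth)
    then have "j \<le> k - 1" "j < length s" by auto
    then have "s ! j \<le> s ! (k-1)" using srt assms len by (intro sorted_nth_mono) auto
    then show "t < a" using j lt by auto
  qed
  then have "filter (\<lambda>t. t < a) (take k s) = take k s" by simp
  then have "length (filter (\<lambda>t. t < a) (take k s)) = k" using assms len by simp
  moreover have "length (filter (\<lambda>t. t < a) s) \<ge> length (filter (\<lambda>t. t < a) (take k s))"
    by (metis append_take_drop_id filter_append length_append le_add1)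
  moreover have "length (filter (\<lambda>t. t < a) s) = length (filter (\<lambda>t. t < a) ts)"
    unfolding s_def by (metis filter_sort length_sort)
  ultimately show False using assms by linarith
qed

lemma quant_upper:
  fixes ts :: "real list"
  assumes "1 \<le> k" "k \<le> length ts" "length (filter (\<lambda>t. t < b) ts) \<ge> k"
  shows "sort ts ! (k-1) < b"
proof (rule ccontr)
  define s where "s = sort ts"
  assume "\<not> sort ts ! (k-1) < b"
  then have ge: "s ! (k-1) \<ge> b" by (simp add: s_def)
  have srt: "sorted s" and len: "length s = length ts" by (simp_all add: s_def)
  have "\<forall>t\<in>set (drop (k-1) s). \<not> t < b"
  proof
    fix t assume "t \<in> set (drop (k-1) s)"
    then obtain j where j: "j < length (drop (k-1) s)" "t = drop (k-1) s ! j" by (metis in_set_conv_nth)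
    then have "s ! (k-1) \<le> s ! (k - 1 + j)" using srt assms len by (intro sorted_nth_mono) auto
    then show "\<not> t < b" using j ge by auto
  qed
  then have "filter (\<lambda>t. t < b) (drop (k-1) s) = []" by (simp add: filter_empty_conv)
  then have "filter (\<lambda>t. t < b) s = filter (\<lambda>t. t < b) (take (k-1) s)"
    by (metis append_take_drop_id filter_append append_Nil2)
  then have "length (filter (\<lambda>t. t < b) s) \<le> k - 1"
    by (metis length_filter_le length_take min.bounded_iff order_trans nat_le_linear)
  moreover have "length (filter (\<lambda>t. t < b) s) = length (filter (\<lambda>t. t < b) ts)"
    unfolding s_def by (metis filter_sort length_sort)
  ultimately show False using assms by linarith
qed

lemma count_sum:
  "real (length (filter P (map g [1..<Suc m]))) = (\<Sum>i=1..m. if P (g i) then 1 else 0)"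
  by (induction m) auto


theorem theorem4:
  fixes M :: "'a measure"
    and f :: "'x \<Rightarrow> real \<Rightarrow> real"
    and x :: "nat \<Rightarrow> 'x"
    and x0 :: "'x"
    and Y :: "nat \<Rightarrow> 'a \<Rightarrow> real"
    and \<alpha> t_star :: real
  assumes "prob_space M"
    and dens_meas: "\<And>z. f z \<in> borel_measurable borel"
    and dens_nonneg: "\<And>z y. 0 \<le> f z y"
    and dens_one: "\<And>z. (\<integral>\<^sup>+ y. ennreal (f z y) \<partial>lborel) = 1"
    and dens_cont: "\<And>z. continuous_on UNIV (f z)"
    and indep: "prob_space.indep_vars M (\<lambda>_. borel) Y {1..}"
    and distr: "\<And>i. i \<ge> 1 \<Longrightarrow> distributed M lborel (Y i) (\<lambda>y. ennreal (f (x i) y))"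
    and same_profile: "\<And>i t. i \<ge> 1 \<Longrightarrow> t \<ge> 0 \<Longrightarrow> profile f (x i) t = profile f x0 t"
    and alpha: "0 < \<alpha>" "\<alpha> < 1"
    and tstar: "t_star \<ge> 0" "profile f x0 t_star = 1 - \<alpha>"
    and tstar_unique: "\<And>t. t \<ge> 0 \<Longrightarrow> profile f x0 t = 1 - \<alpha> \<Longrightarrow> t = t_star"
  shows "AE \<omega> in M.
           (\<lambda>m. emp_quantile \<alpha> (map (\<lambda>i. f (x i) (Y i \<omega>)) [1..<Suc m])) \<longlonglongrightarrow> t_star"
proof -
  interpret prob_space M by fact
  note dens_meas[measurable]
  have rvY[measurable]: "\<And>i. i \<ge> 1 \<Longrightarrow> Y i \<in> borel_measurable M"
    using indep unfolding indep_vars_def by auto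
  define gp where "gp t = profile f x0 t" for t
  have Eprof: "expectation (\<lambda>\<omega>. indicator {y. c \<le> f (x i) y} (Y i \<omega>)) = profile f (x i) c"
    if i: "i \<ge> 1" for i c
  proof -
    have "(\<integral>y. f (x i) y * indicator {y. c \<le> f (x i) y} y \<partial>lborel)
       = (\<integral>\<omega>. indicator {y. c \<le> f (x i) y} (Y i \<omega>) \<partial>M)"
      by (rule distributed_integral[OF distr[OF i]]) (auto simp: dens_nonneg)
    moreover have "profile f (x i) c = (\<integral>y. f (x i) y * indicator {y. c \<le> f (x i) y} y \<partial>lborel)"
      unfolding profile_def set_lebesgue_integral_def by (intro Bochner_Integration.integral_cong) auto
    ultimately show ?thesis by simp
  qed
  have intI: "integrable M (\<lambda>\<omega>. indicator {y. c \<le> f (x i) y} (Y i \<omega>) :: real)" if i: "i \<ge> 1" for i c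
    by (rule integrable_const_bound[where B=1]) (use i in auto)
  define Z where "Z c i \<omega> = (indicator {y. f (x i) y < c} (Y i \<omega>) :: real)" for c i \<omega>
  have EZ: "expectation (Z c i) = 1 - gp c" if i: "i \<ge> 1" and c: "c \<ge> 0" for i c
  proof -
    have "expectation (Z c i) = expectation (\<lambda>\<omega>. 1 - indicator {y. c \<le> f (x i) y} (Y i \<omega>))"
      by (intro Bochner_Integration.integral_cong) (auto simp: Z_def indicator_def)
    also have "\<dots> = 1 - expectation (\<lambda>\<omega>. indicator {y. c \<le> f (x i) y} (Y i \<omega>))"
      using intI[OF i] by (subst Bochner_Integration.integral_diff) (auto simp: prob_space)
    finally show ?thesis using Eprof[OF i] same_profile[OF i c] by (simp add: gp_def)
  qed
  have mono: "gp t \<le> gp s" if "0 \<le> s" "s \<le> t" for s t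
  proof -
    have "expectation (\<lambda>\<omega>. indicator {y. t \<le> f (x 1) y} (Y 1 \<omega>))
        \<le> expectation (\<lambda>\<omega>. indicator {y. s \<le> f (x 1) y} (Y 1 \<omega>) :: real)"
      using intI[of 1] that by (intro integral_mono) (auto simp: indicator_def)
    then show ?thesis using Eprof[of 1] same_profile[of 1] that by (simp add: gp_def)
  qed
  have hc: "AE \<omega> in M. eventually (\<lambda>m. \<bar>(\<Sum>i=1..m. Z c i \<omega>) - m * (1 - gp c)\<bar> < m * \<epsilon>) sequentially"
    if c: "c \<ge> 0" and eps: "\<epsilon> > 0" for c \<epsilon> :: real
  proof (rule hoeff_AE[where Z="Z c" and p="1 - gp c" and \<epsilon>=\<epsilon>])
    show "prob_space M" by fact
    show "\<epsilon> > 0" by fact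
    show "indep_vars (\<lambda>_. borel) (Z c) {1..}"
      unfolding Z_def by (rule indep_vars_compose2[OF indep]) measurable
    show "\<And>i \<omega>. i \<ge> 1 \<Longrightarrow> \<omega> \<in> space M \<Longrightarrow> Z c i \<omega> \<in> {0..1}"
      by (auto simp: Z_def indicator_def)
    show "\<And>i. i \<ge> 1 \<Longrightarrow> expectation (Z c i) = 1 - gp c" using EZ c by auto
  qed
  define a where "a n = t_star - inverse (real (Suc n))" for n
  define b where "b n = t_star + inverse (real (Suc n))" for n
  have AEa: "AE \<omega> in M. a n < 0 \<or> eventually (\<lambda>m. (\<Sum>i=1..m. Z (a n) i \<omega>) < m * \<alpha>) sequentially" for n
  proof (cases "a n < 0")
    case True then show ?thesis by simp
  next
    case False
    then have a0: "a n \<ge> 0" by simp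
    have "a n < t_star" by (simp add: a_def)
    then have "gp (a n) \<ge> gp t_star" "gp (a n) \<noteq> 1 - \<alpha>"
      using mono[OF a0] tstar_unique[OF a0] unfolding gp_def by auto
    then have lt: "1 - gp (a n) < \<alpha>" using tstar by (simp add: gp_def)
    have h: "AE \<omega> in M. eventually (\<lambda>m. \<bar>(\<Sum>i=1..m. Z (a n) i \<omega>) - m * (1 - gp (a n))\<bar> < m * (\<alpha> - (1 - gp (a n)))) sequentially"
      using hc[OF a0, of "\<alpha> - (1 - gp (a n))"] lt by simp
    have "AE \<omega> in M. eventually (\<lambda>m. (\<Sum>i=1..m. Z (a n) i \<omega>) < m * \<alpha>) sequentially"
      using h
    proof (elim AE_mp, intro AE_I2 impI)
      fix \<omega> assume "eventually (\<lambda>m. \<bar>(\<Sum>i=1..m. Z (a n) i \<omega>) - m * (1 - gp (a n))\<bar> < m * (\<alpha> - (1 - gp (a n)))) sequentially"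
      then show "eventually (\<lambda>m. (\<Sum>i=1..m. Z (a n) i \<omega>) < m * \<alpha>) sequentially"
        by (rule eventually_mono) (simp add: abs_less_iff right_diff_distrib)
    qed
    then show ?thesis by (rule AE_mp) auto
  qed
  have AEb: "AE \<omega> in M. eventually (\<lambda>m. (\<Sum>i=1..m. Z (b n) i \<omega>) > m * \<alpha>) sequentially" for n
  proof -
    have b0: "b n \<ge> 0" using tstar by (simp add: b_def add_nonneg_nonneg)
    have "t_star < b n" by (simp add: b_def)
    then have "gp (b n) \<le> gp t_star" "gp (b n) \<noteq> 1 - \<alpha>"
      using mono[of t_star "b n"] tstar tstar_unique[OF b0] unfolding gp_def by auto
    then have lt: "1 - gp (b n) > \<alpha>" using tstar by (simp add: gp_def)
    have h: "AE \<omega> in M. eventually (\<lambda>m. \<bar>(\<Sum>i=1..m. Z (b n) i \<omega>) - m * (1 - gp (b n))\<bar> < m * ((1 - gp (b n)) - \<alpha>)) sequentially"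
      using hc[OF b0, of "(1 - gp (b n)) - \<alpha>"] lt by simp
    show ?thesis
      using h
    proof (elim AE_mp, intro AE_I2 impI)
      fix \<omega> assume "eventually (\<lambda>m. \<bar>(\<Sum>i=1..m. Z (b n) i \<omega>) - m * (1 - gp (b n))\<bar> < m * ((1 - gp (b n)) - \<alpha>)) sequentially"
      then show "eventually (\<lambda>m. (\<Sum>i=1..m. Z (b n) i \<omega>) > m * \<alpha>) sequentially"
        by (rule eventually_mono) (simp add: abs_less_iff right_diff_distrib)
    qed
  qed
  have "AE \<omega> in M. \<forall>n. (a n < 0 \<or> eventually (\<lambda>m. (\<Sum>i=1..m. Z (a n) i \<omega>) < m * \<alpha>) sequentially)
     \<and> eventually (\<lambda>m. (\<Sum>i=1..m. Z (b n) i \<omega>) > m * \<alpha>) sequentially"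
    using AEa AEb by (simp add: AE_all_countable AE_conj_iff)
  then show ?thesis
  proof (rule AE_mp, intro AE_I2 impI)
    fix \<omega> assume H: "\<forall>n. (a n < 0 \<or> eventually (\<lambda>m. (\<Sum>i=1..m. Z (a n) i \<omega>) < m * \<alpha>) sequentially)
     \<and> eventually (\<lambda>m. (\<Sum>i=1..m. Z (b n) i \<omega>) > m * \<alpha>) sequentially"
    define ts where "ts m = map (\<lambda>i. f (x i) (Y i \<omega>)) [1..<Suc m]" for m
    define k where "k m = nat \<lceil>\<alpha> * real m\<rceil>" for m
    have cnt: "real (length (filter (\<lambda>t. t < c) (ts m))) = (\<Sum>i=1..m. Z c i \<omega>)" for c m
      unfolding ts_def Z_def by (subst count_sum, intro sum.cong) (auto simp: indicator_def)
    have lenk: "1 \<le> k m" "k m \<le> length (ts m)" if "m \<ge> 1" for m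
    proof -
      have "0 < \<alpha> * real m" using alpha that by simp
      then show "1 \<le> k m" unfolding k_def by linarith
      have "\<alpha> * real m \<le> real m" using alpha that by simp
      then have "\<lceil>\<alpha> * real m\<rceil> \<le> int m" by (simp add: ceiling_le_iff)
      then show "k m \<le> length (ts m)" unfolding k_def ts_def by (simp only: length_map length_upt)
    qed
    have q: "emp_quantile \<alpha> (ts m) = sort (ts m) ! (k m - 1)" for m
      unfolding emp_quantile_def k_def ts_def by (simp only: length_map length_upt diff_Suc_1)
    show "(\<lambda>m. emp_quantile \<alpha> (map (\<lambda>i. f (x i) (Y i \<omega>)) [1..<Suc m])) \<longlonglongrightarrow> t_star"
      unfolding tendsto_iff
    proof (intro allI impI)
      fix r :: real assume r: "r > 0"
      obtain n where n: "inverse (real (Suc n)) < r" using reals_Archimedean[OF r] by auto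
      have lower: "eventually (\<lambda>m. m \<ge> 1 \<longrightarrow> a n \<le> emp_quantile \<alpha> (ts m)) sequentially"
      proof (cases "a n < 0")
        case True
        show ?thesis
        proof (intro always_eventually allI impI)
          fix m :: nat assume m: "m \<ge> 1"
          have "filter (\<lambda>t. t < a n) (ts m) = []"
            using True dens_nonneg unfolding ts_def by (auto simp: filter_empty_conv not_less intro: order_trans[of _ 0])
          then show "a n \<le> emp_quantile \<alpha> (ts m)"
            unfolding q using lenk[OF m] by (intro quant_lower) auto
        qed
      next
        case False
        then have "eventually (\<lambda>m. (\<Sum>i=1..m. Z (a n) i \<omega>) < m * \<alpha>) sequentially" using H by auto
        then show ?thesis
        proof (rule eventually_mono, intro impI)
          fix m :: nat assume m: "m \<ge> 1" and s: "(\<Sum>i=1..m. Z (a n) i \<omega>) < m * \<alpha>"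
          have "real m * \<alpha> \<le> real (k m)" unfolding k_def by (simp add: mult.commute) linarith
          then have "length (filter (\<lambda>t. t < a n) (ts m)) < k m" using s cnt[of "a n" m] by linarith
          then show "a n \<le> emp_quantile \<alpha> (ts m)"
            unfolding q using lenk[OF m] by (intro quant_lower) auto
        qed
      qed
      have upper: "eventually (\<lambda>m. m \<ge> 1 \<longrightarrow> emp_quantile \<alpha> (ts m) < b n) sequentially"
        using conjunct2[OF spec[OF H, of n]]
      proof (rule eventually_mono, intro impI)
        fix m :: nat assume m: "m \<ge> 1" and s: "(\<Sum>i=1..m. Z (b n) i \<omega>) > m * \<alpha>"
        then have "\<alpha> * real m \<le> real (length (filter (\<lambda>t. t < b n) (ts m)))"
          using cnt[of "b n" m] by (simp add: mult.commute)
        then have "\<lceil>\<alpha> * real m\<rceil> \<le> int (length (filter (\<lambda>t. t < b n) (ts m)))"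
          by (intro ceiling_le) simp
        then have "k m \<le> length (filter (\<lambda>t. t < b n) (ts m))" unfolding k_def by (simp only: nat_le_iff)
        then show "emp_quantile \<alpha> (ts m) < b n"
          unfolding q using lenk[OF m] by (intro quant_upper) auto
      qed
      have "eventually (\<lambda>m. (m::nat) \<ge> 1) sequentially" by (rule eventually_ge_at_top)
      with lower upper show "eventually (\<lambda>m. dist (emp_quantile \<alpha> (map (\<lambda>i. f (x i) (Y i \<omega>)) [1..<Suc m])) t_star < r) sequentially"
      proof (eventually_elim)
        case (elim m)
        then have "a n \<le> emp_quantile \<alpha> (ts m)" "emp_quantile \<alpha> (ts m) < b n" by auto
        then show ?case using n unfolding ts_def a_def b_def dist_real_def by auto
      qed
    qed
  qed
qed

end
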